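(* Let $T$ be a bounded linear operator on a complex Hilbert space, and suppose $T^k$ is quasiposinormal and $T^\ell$ is coquasiposinormal for some positive integers $k,\ell$. Then $T^m$ is both quasiposinormal and coquasiposinormal for every integer $m\ge m_0$, where $m_0=\operatorname{lcm}(k,\ell)$. Moreover: (a) if $\operatorname{dsc}(T)=1$, then $T$ is quasiposinormal; (b) if $\operatorname{asc}(T)=1$, then $T$ is coquasiposinormal.
   Context: $\mathcal{N}(A)$ and $\mathcal{R}(A)$ denote kernel and range. $A$ is quasiposinormal if $\mathcal{N}(A)\subseteq\mathcal{N}(A^* )$, and coquasiposinormal if $\mathcal{N}(A^* )\subseteq\mathcal{N}(A)$. The ascent $\operatorname{asc}(A)$ is the least integer $m\ge0$ with $\mathcal{N}(A^m)=\mathcal{N}(A^{m+1})$, and the descent $\operatorname{dsc}(A)$ is the least integer $m\ge0$ with $\mathcal{R}(A^{m+1})=\mathcal{R}(A^m)$ (when such integers exist). *)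

theory Defs
  imports "HOL-Analysis.Analysis"
begin

text \<open>Complex Hilbert spaces: a real Banach space (the underlying real normed
  structure) equipped with a complex scalar multiplication and a complex inner
  product (conjugate-linear in the first argument) inducing the norm.\<close>

class complex_hilbert = banach +
  fixes cscale :: "complex \<Rightarrow> 'a \<Rightarrow> 'a"
    and cinner :: "'a \<Rightarrow> 'a \<Rightarrow> complex"
  assumes cscale_of_real: "cscale (complex_of_real r) x = r *\<^sub>R x"
    and cscale_assoc: "cscale a (cscale b x) = cscale (a * b) x"
    and cscale_add_right: "cscale a (x + y) = cscale a x + cscale a y"
    and cscale_add_left: "cscale (a + b) x = cscale a x + cscale b x"
    and cinner_commute: "cinner x y = cnj (cinner y x)"
    and cinner_add_left: "cinner (x + y) z = cinner x z + cinner y z"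
    and cinner_cscale_left: "cinner (cscale a x) y = cnj a * cinner x y"
    and cinner_self_norm: "cinner x x = complex_of_real ((norm x)\<^sup>2)"

definition bounded_clinear_op :: "('a::complex_hilbert \<Rightarrow> 'a) \<Rightarrow> bool" where
  "bounded_clinear_op T \<longleftrightarrow> bounded_linear T \<and> (\<forall>c x. T (cscale c x) = cscale c (T x))"

definition is_hadjoint :: "('a::complex_hilbert \<Rightarrow> 'a) \<Rightarrow> ('a \<Rightarrow> 'a) \<Rightarrow> bool" where
  "is_hadjoint T S \<longleftrightarrow> (\<forall>x y. cinner (T x) y = cinner x (S y))"

definition hadjoint :: "('a::complex_hilbert \<Rightarrow> 'a) \<Rightarrow> ('a \<Rightarrow> 'a)" where
  "hadjoint T = (SOME S. is_hadjoint T S)"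

definition op_kernel :: "('a::complex_hilbert \<Rightarrow> 'a) \<Rightarrow> 'a set" where
  "op_kernel T = {x. T x = 0}"

definition op_range :: "('a::complex_hilbert \<Rightarrow> 'a) \<Rightarrow> 'a set" where
  "op_range T = range T"

definition quasiposinormal :: "('a::complex_hilbert \<Rightarrow> 'a) \<Rightarrow> bool" where
  "quasiposinormal A \<longleftrightarrow> op_kernel A \<subseteq> op_kernel (hadjoint A)"

definition coquasiposinormal :: "('a::complex_hilbert \<Rightarrow> 'a) \<Rightarrow> bool" where
  "coquasiposinormal A \<longleftrightarrow> op_kernel (hadjoint A) \<subseteq> op_kernel A"

definition ascent :: "('a::complex_hilbert \<Rightarrow> 'a) \<Rightarrow> nat option" where
  "ascent A = (if \<exists>m. op_kernel (A ^^ m) = op_kernel (A ^^ Suc m)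
     then Some (LEAST m. op_kernel (A ^^ m) = op_kernel (A ^^ Suc m)) else None)"

definition descent :: "('a::complex_hilbert \<Rightarrow> 'a) \<Rightarrow> nat option" where
  "descent A = (if \<exists>m. op_range (A ^^ Suc m) = op_range (A ^^ m)
     then Some (LEAST m. op_range (A ^^ Suc m) = op_range (A ^^ m)) else None)"

end

theory Submission
  imports Defs
begin

lemma cinner_zero_left[simp]: "cinner (0::'a::complex_hilbert) y = 0"
proof -
  have "cinner (0+0::'a) y = cinner 0 y + cinner 0 y" by (rule cinner_add_left)
  then show ?thesis by simp
qed

lemma cinner_minus_left: "cinner (- x::'a::complex_hilbert) y = - cinner x y"
proof -
  have "cinner (-x + x::'a) y = cinner (-x) y + cinner x y" by (rule cinner_add_left)
  then show ?thesis by (simp add: eq_neg_iff_add_eq_0)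
qed

lemma cinner_diff_left: "cinner (x - z::'a::complex_hilbert) y = cinner x y - cinner z y"
  using cinner_add_left[of x "-z" y] cinner_minus_left[of z y] by simp

lemma cinner_add_right: "cinner (x::'a::complex_hilbert) (y + z) = cinner x y + cinner x z"
  by (metis cinner_add_left cinner_commute complex_cnj_add)

lemma cinner_zero_right[simp]: "cinner (x::'a::complex_hilbert) 0 = 0"
  by (metis cinner_commute cinner_zero_left complex_cnj_zero)

lemma cinner_diff_right: "cinner (x::'a::complex_hilbert) (y - z) = cinner x y - cinner x z"
  by (metis cinner_diff_left cinner_commute complex_cnj_diff)

lemma cinner_cscale_right: "cinner (x::'a::complex_hilbert) (cscale a y) = a * cinner x y"
  by (metis cinner_cscale_left cinner_commute complex_cnj_cnj complex_cnj_mult)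

lemma cinner_scaleR_left: "cinner (r *\<^sub>R x::'a::complex_hilbert) y = complex_of_real r * cinner x y"
  by (metis cinner_cscale_left cscale_of_real complex_cnj_complex_of_real)

lemma cinner_scaleR_right: "cinner (x::'a::complex_hilbert) (r *\<^sub>R y) = complex_of_real r * cinner x y"
  by (metis cinner_cscale_right cscale_of_real)

lemma cinner_self_zero: "cinner (x::'a::complex_hilbert) x = 0 \<longleftrightarrow> x = 0"
  by (simp add: cinner_self_norm)

lemma norm_sq_add: "complex_of_real ((norm (x + y::'a::complex_hilbert))\<^sup>2)
   = complex_of_real ((norm x)\<^sup>2) + cinner x y + cinner y x + complex_of_real ((norm y)\<^sup>2)"
proof -
  have "cinner (x+y) (x+y) = cinner x x + cinner x y + cinner y x + cinner y y"
    by (simp add: cinner_add_left cinner_add_right)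
  then show ?thesis by (simp only: cinner_self_norm)
qed

lemma norm_sq_diff: "complex_of_real ((norm (x - y::'a::complex_hilbert))\<^sup>2)
   = complex_of_real ((norm x)\<^sup>2) - cinner x y - cinner y x + complex_of_real ((norm y)\<^sup>2)"
proof -
  have "cinner (x-y) (x-y) = cinner x x - cinner x y - cinner y x + cinner y y"
    by (simp add: cinner_diff_left cinner_diff_right)
  then show ?thesis by (simp only: cinner_self_norm)
qed

lemma re_cinner_sym: "Re (cinner (x::'a::complex_hilbert) y) = Re (cinner y x)"
  by (subst cinner_commute) simp

lemma parallelogram: "(norm (x + y::'a::complex_hilbert))\<^sup>2 + (norm (x - y))\<^sup>2 = 2 * (norm x)\<^sup>2 + 2 * (norm y)\<^sup>2"
proof -
  have "complex_of_real ((norm (x + y))\<^sup>2 + (norm (x - y))\<^sup>2) = complex_of_real (2 * (norm x)\<^sup>2 + 2 * (norm y)\<^sup>2)"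
    unfolding of_real_add using norm_sq_add[of x y] norm_sq_diff[of x y] by simp
  then show ?thesis using of_real_eq_iff by blast
qed

lemma polar_re: "Re (cinner (a::'a::complex_hilbert) b) = ((norm (a + b))\<^sup>2 - (norm (a - b))\<^sup>2) / 4"
proof -
  have "Re (complex_of_real ((norm (a + b))\<^sup>2) - complex_of_real ((norm (a - b))\<^sup>2)) = 4 * Re (cinner a b)"
    unfolding norm_sq_add norm_sq_diff using re_cinner_sym[of b a] by simp
  then show ?thesis by simp
qed

lemma polar_im: "Im (cinner (a::'a::complex_hilbert) b) = Re (cinner (cscale \<i> a) b)"
  by (simp add: cinner_cscale_left)

lemma cinner_polar: "cinner (a::'a::complex_hilbert) b =
   complex_of_real (((norm (a + b))\<^sup>2 - (norm (a - b))\<^sup>2) / 4)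
   + \<i> * complex_of_real (((norm (cscale \<i> a + b))\<^sup>2 - (norm (cscale \<i> a - b))\<^sup>2) / 4)"
  by (simp add: complex_eq_iff polar_re[symmetric] polar_im)

lemma continuous_cinner_right: "continuous_on UNIV (\<lambda>b. cinner (a::'a::complex_hilbert) b)"
  by (subst cinner_polar) (intro continuous_intros; simp)


lemma quad_nonneg_zero:
  fixes a c :: real
  assumes "a \<ge> 0" and "\<And>t. 0 \<le> 2 * t * c + t\<^sup>2 * a"
  shows "c = 0"
proof -
  have "0 \<le> 2 * (- c / (a + 1)) * c + (- c / (a + 1))\<^sup>2 * a" by (rule assms(2))
  also have "\<dots> = c\<^sup>2 * (- a - 2) / (a + 1)\<^sup>2"
    using assms(1) apply (subgoal_tac "a + 1 \<noteq> 0")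
    apply (simp add: divide_simps power2_eq_square)
     apply (simp add: algebra_simps)
    apply simp
    done
  finally have "0 \<le> c\<^sup>2 * (- a - 2)"
    using assms(1) by (simp add: zero_le_divide_iff)
  then have "c\<^sup>2 * (a + 2) \<le> 0" by (simp add: algebra_simps)
  moreover have "c \<noteq> 0 \<Longrightarrow> 0 < c\<^sup>2 * (a + 2)" using assms(1) by (simp add: mult_pos_pos)
  ultimately show ?thesis by force
qed

lemma riesz:
  fixes g :: "'a::complex_hilbert \<Rightarrow> complex"
  assumes add: "\<And>x y. g (x + y) = g x + g y"
    and sc: "\<And>c x. g (cscale c x) = c * g x"
    and cont: "continuous_on UNIV g"
  shows "\<exists>z. \<forall>x. g x = cinner z x"
proof (cases "\<forall>x. g x = 0")
  case True
  then show ?thesis by (intro exI[of _ 0]) simp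
next
  case False
  then obtain v where v: "g v \<noteq> 0" by blast
  have g0: "g 0 = 0" using add[of 0 0] by simp
  have gminus: "g (- x) = - g x" for x using add[of "-x" x] g0 by (simp add: eq_neg_iff_add_eq_0)
  have gdiff: "g (x - y) = g x - g y" for x y using add[of x "-y"] gminus[of y] by simp
  have gR: "g (r *\<^sub>R x) = complex_of_real r * g x" for r x using sc[of "complex_of_real r" x]
    by (simp add: cscale_of_real)
  define u where "u = cscale (1 / g v) v"
  have gu: "g u = 1" using v by (simp add: u_def sc)
  define A where "A = {x. g x = 1}"
  define d2 where "d2 = Inf ((\<lambda>x. (norm x)\<^sup>2) ` A)"
  have Ane: "(\<lambda>x. (norm x)\<^sup>2) ` A \<noteq> {}" using gu A_def by auto
  have bdd: "bdd_below ((\<lambda>x. (norm x)\<^sup>2) ` A)" by (rule bdd_belowI[of _ 0]) auto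
  have lower: "d2 \<le> (norm x)\<^sup>2" if "g x = 1" for x
    unfolding d2_def using that A_def by (intro cInf_lower bdd) auto
  have "\<exists>x. g x = 1 \<and> (norm x)\<^sup>2 < d2 + 1 / Suc n" for n
  proof -
    have "Inf ((\<lambda>x. (norm x)\<^sup>2) ` A) < d2 + 1 / Suc n" unfolding d2_def by simp
    from cInf_lessD[OF Ane this] show ?thesis unfolding A_def by auto
  qed
  then have "\<forall>n. \<exists>x. g x = 1 \<and> (norm x)\<^sup>2 < d2 + 1 / Suc n" by blast
  then obtain X where X: "\<forall>n. g (X n) = 1 \<and> (norm (X n))\<^sup>2 < d2 + 1 / Suc n"
    by metis
  have X1: "\<And>n. g (X n) = 1" and X2: "\<And>n. (norm (X n))\<^sup>2 < d2 + 1 / Suc n" using X by auto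
  have dXX: "(norm (X n - X m))\<^sup>2 \<le> 2 / Suc n + 2 / Suc m" for n m
  proof -
    have "g ((1/2) *\<^sub>R (X n + X m)) = 1" using X1 by (simp add: gR add)
    then have "d2 \<le> (norm ((1/2) *\<^sub>R (X n + X m)))\<^sup>2" by (rule lower)
    also have "\<dots> = (norm (X n + X m))\<^sup>2 / 4" by (simp add: power2_eq_square)
    finally have "4 * d2 \<le> (norm (X n + X m))\<^sup>2" by simp
    moreover have "(norm (X n + X m))\<^sup>2 + (norm (X n - X m))\<^sup>2 = 2 * (norm (X n))\<^sup>2 + 2 * (norm (X m))\<^sup>2"
      by (rule parallelogram)
    ultimately show ?thesis using X2[of n] X2[of m] by linarith
  qed
  have "Cauchy X"
  proof (rule metric_CauchyI)
    fix e :: real assume e: "0 < e"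
    obtain N :: nat where N: "4 / e\<^sup>2 < N" using reals_Archimedean2 by blast
    have "4 / Suc N < e\<^sup>2"
    proof -
      have "4 < e\<^sup>2 * N" using N e by (simp add: field_simps)
      also have "\<dots> \<le> e\<^sup>2 * Suc N" using e by simp
      finally show ?thesis by (simp add: field_simps)
    qed
    have "dist (X m) (X n) < e" if "m \<ge> N" "n \<ge> N" for m n
    proof -
      have "2 / Suc m \<le> 2 / Suc N" "2 / Suc n \<le> 2 / Suc N" using that by (simp_all add: frac_le)
      then have "(dist (X m) (X n))\<^sup>2 < e\<^sup>2" using dXX[of m n] \<open>4 / Suc N < e\<^sup>2\<close>
        by (simp add: dist_norm)
      then show ?thesis using e by (simp add: power_less_imp_less_base)
    qed
    then show "\<exists>M. \<forall>m\<ge>M. \<forall>n\<ge>M. dist (X m) (X n) < e" by blast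
  qed
  then obtain w where w: "X \<longlonglongrightarrow> w" using Cauchy_convergent_iff convergent_def by blast
  have "(\<lambda>n. g (X n)) \<longlonglongrightarrow> g w"
    by (rule continuous_on_tendsto_compose[OF cont w]) auto
  then have gw: "g w = 1" using X1 by (simp add: LIMSEQ_const_iff)
  have "(\<lambda>n. (norm (X n))\<^sup>2) \<longlonglongrightarrow> (norm w)\<^sup>2" using w by (intro tendsto_intros)
  moreover have "(\<lambda>n. d2 + 1 / real (Suc n)) \<longlonglongrightarrow> d2 + 0"
    by (intro tendsto_intros LIMSEQ_Suc[OF lim_inverse_n'])
  ultimately have "(norm w)\<^sup>2 \<le> d2 + 0" using X2 by (intro LIMSEQ_le) (auto intro: less_imp_le)
  then have w2: "(norm w)\<^sup>2 \<le> d2" by simp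
  have wmin: "(norm w)\<^sup>2 \<le> (norm x)\<^sup>2" if "g x = 1" for x using lower[OF that] w2 by linarith
  have reorth: "Re (cinner w k) = 0" if "g k = 0" for k
  proof (rule quad_nonneg_zero)
    show "0 \<le> (norm k)\<^sup>2" by simp
    fix t :: real
    have "g (w + t *\<^sub>R k) = 1" using gw that by (simp add: add gR)
    then have "(norm w)\<^sup>2 \<le> (norm (w + t *\<^sub>R k))\<^sup>2" by (rule wmin)
    also have "(norm (w + t *\<^sub>R k))\<^sup>2 = Re (complex_of_real ((norm (w + t *\<^sub>R k))\<^sup>2))" by simp
    also have "\<dots> = (norm w)\<^sup>2 + 2 * t * Re (cinner w k) + t\<^sup>2 * (norm k)\<^sup>2"
      unfolding norm_sq_add using re_cinner_sym[of k w]
      by (simp add: cinner_scaleR_left cinner_scaleR_right power2_eq_square)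
    finally show "0 \<le> 2 * t * Re (cinner w k) + t\<^sup>2 * (norm k)\<^sup>2" by simp
  qed
  have orth: "cinner w k = 0" if "g k = 0" for k
  proof -
    have "g (cscale \<i> k) = 0" using that by (simp add: sc)
    then have "Re (cinner w (cscale \<i> k)) = 0" by (rule reorth)
    then have "Im (cinner w k) = 0" by (simp add: cinner_cscale_right)
    with reorth[OF that] show ?thesis by (simp add: complex_eq_iff)
  qed
  have wnz: "w \<noteq> 0" using gw g0 by auto
  define z where "z = (1 / (norm w)\<^sup>2) *\<^sub>R w"
  have "g x = cinner z x" for x
  proof -
    have "g (x - cscale (g x) w) = 0" using gw by (simp add: gdiff sc)
    then have "cinner w (x - cscale (g x) w) = 0" by (rule orth)
    then have "cinner w x = g x * complex_of_real ((norm w)\<^sup>2)"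
      by (simp add: cinner_diff_right cinner_cscale_right cinner_self_norm)
    then show ?thesis using wnz by (simp add: z_def cinner_scaleR_left)
  qed
  then show ?thesis by blast
qed


lemma adjoint_exists:
  fixes T :: "'a::complex_hilbert \<Rightarrow> 'a"
  assumes "bounded_clinear_op T"
  shows "\<exists>S. is_hadjoint T S"
proof -
  have bl: "bounded_linear T" and cs: "\<And>c x. T (cscale c x) = cscale c (T x)"
    using assms unfolding bounded_clinear_op_def by auto
  have "\<exists>z. \<forall>x. cinner y (T x) = cinner z x" for y
  proof (rule riesz)
    show "cinner y (T (x + z)) = cinner y (T x) + cinner y (T z)" for x z
      using bl by (simp add: linear_simps cinner_add_right)
    show "cinner y (T (cscale c x)) = c * cinner y (T x)" for c x
      by (simp add: cs cinner_cscale_right)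
    show "continuous_on UNIV (\<lambda>x. cinner y (T x))"
      using continuous_on_compose2[OF continuous_cinner_right linear_continuous_on[OF bl]] by simp
  qed
  then have "\<forall>y. \<exists>z. \<forall>x. cinner y (T x) = cinner z x" by blast
  then obtain S where S: "\<forall>y. \<forall>x. cinner y (T x) = cinner (S y) x" by (rule choice[THEN exE]) 
  have "cinner (T x) y = cinner x (S y)" for x y
  proof -
    have "cinner y (T x) = cinner (S y) x" using S by blast
    then have "cnj (cinner y (T x)) = cnj (cinner (S y) x)" by simp
    then show ?thesis using cinner_commute[of "T x" y] cinner_commute[of x "S y"] by simp
  qed
  then show ?thesis unfolding is_hadjoint_def by blast
qed

lemma adjoint_unique:
  assumes "is_hadjoint T S" "is_hadjoint T S'"
  shows "S = S'"
proof
  fix y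
  have "cinner x (S y - S' y) = 0" for x
    using assms unfolding is_hadjoint_def by (simp add: cinner_diff_right)
  from this[of "S y - S' y"] show "S y = S' y" by (simp add: cinner_self_zero)
qed

lemma hadjoint_eq: "is_hadjoint T S \<Longrightarrow> hadjoint T = S"
proof -
  assume a: "is_hadjoint T S"
  have "is_hadjoint T (SOME S. is_hadjoint T S)" using someI[of "is_hadjoint T" S] a .
  then show ?thesis unfolding hadjoint_def using a by (rule adjoint_unique)
qed

lemma adjoint_pow: "is_hadjoint T S \<Longrightarrow> is_hadjoint (T ^^ n) (S ^^ n)"
proof (induction n)
  case 0
  then show ?case by (simp add: is_hadjoint_def)
next
  case (Suc n)
  show ?case unfolding is_hadjoint_def
  proof (intro allI)
    fix x y
    have "cinner ((T ^^ Suc n) x) y = cinner (T ((T ^^ n) x)) y" by simp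
    also have "\<dots> = cinner ((T ^^ n) x) (S y)" using Suc.prems unfolding is_hadjoint_def by blast
    also have "\<dots> = cinner x ((S ^^ n) (S y))" using Suc.IH[OF Suc.prems] unfolding is_hadjoint_def by blast
    also have "(S ^^ n) (S y) = (S ^^ Suc n) y" by (simp only: funpow_Suc_right comp_apply)
    finally show "cinner ((T ^^ Suc n) x) y = cinner x ((S ^^ Suc n) y)" .
  qed
qed

lemma adjoint_sym: "is_hadjoint T S \<Longrightarrow> is_hadjoint S T"
  unfolding is_hadjoint_def
proof (intro allI)
  fix x y assume a: "\<forall>x y. cinner (T x) y = cinner x (S y)"
  have "cinner (T y) x = cinner y (S x)" using a by blast
  then have "cnj (cinner (T y) x) = cnj (cinner y (S x))" by simp
  then show "cinner (S x) y = cinner x (T y)"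
    using cinner_commute[of "S x" y] cinner_commute[of x "T y"] by simp
qed

lemma adjoint_kernel:
  assumes a: "is_hadjoint A B"
  shows "B x = 0 \<longleftrightarrow> (\<forall>y. cinner (A y) x = 0)"
proof
  assume "B x = 0" then show "\<forall>y. cinner (A y) x = 0" using a unfolding is_hadjoint_def by simp
next
  assume "\<forall>y. cinner (A y) x = 0"
  then have "cinner (A (B x)) x = 0" by blast
  then have "cinner (B x) (B x) = 0" using a unfolding is_hadjoint_def by simp
  then show "B x = 0" by (simp add: cinner_self_zero)
qed

lemma adjoint_zero: "is_hadjoint A B \<Longrightarrow> B 0 = 0"
  by (simp add: adjoint_kernel)

lemma pow_zero: "(P::'b::zero \<Rightarrow> 'b) 0 = 0 \<Longrightarrow> (P ^^ n) 0 = 0"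
  by (induction n) auto

lemma pow_mono_kernel:
  fixes P :: "'b::zero \<Rightarrow> 'b"
  assumes "P 0 = 0" "(P ^^ i) x = 0" "i \<le> j"
  shows "(P ^^ j) x = 0"
proof -
  have "(P ^^ j) x = (P ^^ (j - i)) ((P ^^ i) x)"
  proof -
    have "j = (j - i) + i" using assms(3) by simp
    then have "(P ^^ j) x = (P ^^ ((j - i) + i)) x" by simp
    then show ?thesis by (simp only: funpow_add comp_apply)
  qed
  then show ?thesis using assms pow_zero by simp
qed

lemma asc_step:
  assumes "is_hadjoint A B" "\<forall>x. A x = 0 \<longrightarrow> B x = 0" "A (A x) = 0"
  shows "A x = 0"
proof -
  have "B (A x) = 0" using assms by blast
  then have "cinner (A x) (A x) = 0" using adjoint_kernel[OF assms(1)] by blast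
  then show ?thesis by (simp add: cinner_self_zero)
qed

lemma stabilize:
  fixes P :: "'b::zero \<Rightarrow> 'b"
  assumes P0: "P 0 = 0" and k: "k > 0" and st: "\<And>x. (P ^^ k) ((P ^^ k) x) = 0 \<Longrightarrow> (P ^^ k) x = 0"
  shows "(P ^^ (k + n)) x = 0 \<Longrightarrow> (P ^^ k) x = 0"
proof (induction n arbitrary: x)
  case 0
  then show ?case by simp
next
  case (Suc n)
  have "(P ^^ (k + n)) (P x) = 0" using Suc.prems
    by (simp only: add_Suc_right funpow_Suc_right comp_apply)
  then have "(P ^^ k) (P x) = 0" by (rule Suc.IH)
  then have h: "(P ^^ (Suc k)) x = 0" by (simp only: funpow_Suc_right comp_apply)
  obtain k' where k': "k = Suc k'" using k by (cases k) auto
  have e1: "(P ^^ (k' + Suc k)) x = (P ^^ k') ((P ^^ Suc k) x)" by (simp only: funpow_add comp_apply)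
  have e2: "(P ^^ (k + k)) x = (P ^^ k) ((P ^^ k) x)" by (simp only: funpow_add comp_apply)
  have eq: "k' + Suc k = k + k" using k' by simp
  have "(P ^^ k) ((P ^^ k) x) = (P ^^ (k' + Suc k)) x" by (simp only: e2[symmetric] eq)
  then have "(P ^^ k) ((P ^^ k) x) = (P ^^ k') ((P ^^ Suc k) x)" using e1 by (rule trans)
  then have "(P ^^ k) ((P ^^ k) x) = 0" using h pow_zero[of P k', OF P0] by simp
  then show ?case by (rule st)
qed

lemma stabilize':
  fixes P :: "'b::zero \<Rightarrow> 'b"
  assumes "P 0 = 0" "k > 0" "\<And>x. (P ^^ k) ((P ^^ k) x) = 0 \<Longrightarrow> (P ^^ k) x = 0"
    "k \<le> j" "(P ^^ j) x = 0"
  shows "(P ^^ k) x = 0"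
  using stabilize[OF assms(1-3), of "j - k" x] assms(4,5) by simp


lemma ker_collapse:
  assumes "\<And>x. T (T x) = 0 \<Longrightarrow> T x = 0"
  shows "(T ^^ Suc n) x = 0 \<Longrightarrow> T x = 0"
proof (induction n arbitrary: x)
  case 0 then show ?case by simp
next
  case (Suc n)
  have "T (T ((T ^^ n) x)) = 0" using Suc.prems by simp
  then have "T ((T ^^ n) x) = 0" by (rule assms)
  then have "(T ^^ Suc n) x = 0" by simp
  then show ?case by (rule Suc.IH)
qed

lemma range_collapse:
  assumes "range (\<lambda>x. T (T x)) = range T"
  shows "range (T ^^ Suc n) = range T"
proof (induction n)
  case 0 then show ?case by simp
next
  case (Suc n)
  have "range (T ^^ Suc (Suc n)) = T ` range (T ^^ Suc n)"
    by (simp only: funpow.simps(2) image_comp)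
  also have "\<dots> = T ` range T" using Suc.IH by simp
  also have "\<dots> = range (\<lambda>x. T (T x))" by (simp add: image_comp comp_def)
  finally show ?case using assms by simp
qed

theorem theorem5p8:
  fixes T :: "'a::complex_hilbert \<Rightarrow> 'a" and k l :: nat
  assumes "bounded_clinear_op T"
    and "k > 0" and "l > 0"
    and "quasiposinormal (T ^^ k)"
    and "coquasiposinormal (T ^^ l)"
  shows "(\<forall>m \<ge> lcm k l. quasiposinormal (T ^^ m) \<and> coquasiposinormal (T ^^ m))
    \<and> (descent T = Some 1 \<longrightarrow> quasiposinormal T)
    \<and> (ascent T = Some 1 \<longrightarrow> coquasiposinormal T)"
proof -
  obtain S where S: "is_hadjoint T S" using adjoint_exists[OF assms(1)] by blast
  have hadj: "\<And>j. hadjoint (T ^^ j) = S ^^ j" using hadjoint_eq adjoint_pow S by blast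
  have ST: "is_hadjoint S T" using S by (rule adjoint_sym)
  have T0: "T 0 = 0" using ST by (rule adjoint_zero)
  have S0: "S 0 = 0" using S by (rule adjoint_zero)
  have qk: "\<And>x. (T ^^ k) x = 0 \<Longrightarrow> (S ^^ k) x = 0"
    using assms(4) unfolding quasiposinormal_def op_kernel_def hadj by blast
  have cl: "\<And>x. (S ^^ l) x = 0 \<Longrightarrow> (T ^^ l) x = 0"
    using assms(5) unfolding coquasiposinormal_def op_kernel_def hadj by blast
  have stT: "\<And>x. (T ^^ k) ((T ^^ k) x) = 0 \<Longrightarrow> (T ^^ k) x = 0"
    using asc_step[OF adjoint_pow[OF S]] qk by blast
  have stS: "\<And>x. (S ^^ l) ((S ^^ l) x) = 0 \<Longrightarrow> (S ^^ l) x = 0"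
    using asc_step[OF adjoint_pow[OF ST]] cl by blast
  have P1: "quasiposinormal (T ^^ m) \<and> coquasiposinormal (T ^^ m)" if m: "m \<ge> lcm k l" for m
  proof
    have "0 < lcm k l" using assms(2,3) by (simp add: lcm_pos_nat)
    then have km: "k \<le> m" and lm: "l \<le> m" using m dvd_imp_le[OF dvd_lcm1[of k l]] dvd_imp_le[OF dvd_lcm2[of l k]]
      by (auto simp: lcm.commute intro: order_trans)
    show "quasiposinormal (T ^^ m)"
      unfolding quasiposinormal_def op_kernel_def hadj
    proof (intro subsetI, simp)
      fix x assume "(T ^^ m) x = 0"
      then have "(T ^^ k) x = 0" using stabilize'[of T k m x] T0 assms(2) stT km by blast
      then have "(S ^^ k) x = 0" by (rule qk)
      then show "(S ^^ m) x = 0" using pow_mono_kernel[of S k x m] S0 km by blast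
    qed
    show "coquasiposinormal (T ^^ m)"
      unfolding coquasiposinormal_def op_kernel_def hadj
    proof (intro subsetI, simp)
      fix x assume "(S ^^ m) x = 0"
      then have "(S ^^ l) x = 0" using stabilize'[of S l m x] S0 assms(3) stS lm by blast
      then have "(T ^^ l) x = 0" by (rule cl)
      then show "(T ^^ m) x = 0" using pow_mono_kernel[of T l x m] T0 lm by blast
    qed
  qed
  have P2: "quasiposinormal T" if d: "descent T = Some 1"
  proof -
    let ?P = "\<lambda>m. op_range (T ^^ Suc m) = op_range (T ^^ m)"
    have ex: "\<exists>m. ?P m" using d unfolding descent_def by (auto split: if_splits)
    then have "(LEAST m. ?P m) = 1" using d unfolding descent_def by auto
    with LeastI_ex[OF ex] have "?P 1" by simp
    then have R2: "range (\<lambda>x. T (T x)) = range T"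
      unfolding op_range_def by (simp add: numeral_2_eq_2)
    obtain k' where k': "k = Suc k'" using assms(2) by (cases k) auto
    have rk: "range (T ^^ k) = range T" unfolding k' by (rule range_collapse[OF R2])
    have N2: "T x = 0" if "T (T x) = 0" for x
    proof -
      have "T x \<in> range (T ^^ k)" using rk by auto
      then obtain z where z: "T x = (T ^^ k) z" by auto
      have "(T ^^ Suc k) z = 0" using z that by simp
      then have "(T ^^ k) z = 0" using stabilize'[of T k "Suc k" z] T0 assms(2) stT by simp
      then show ?thesis using z by simp
    qed
    show ?thesis unfolding quasiposinormal_def op_kernel_def hadjoint_eq[OF S]
    proof (intro subsetI, simp)
      fix x assume "T x = 0"
      then have "(T ^^ k) x = 0" using pow_mono_kernel[of T 1 x k] T0 assms(2) by simp
      then have "(S ^^ k) x = 0" by (rule qk)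
      then have h: "\<forall>y. cinner ((T ^^ k) y) x = 0" using adjoint_kernel[OF adjoint_pow[OF S]] by blast
      have "\<forall>y. cinner (T y) x = 0"
      proof
        fix y
        have "T y \<in> range (T ^^ k)" using rk by auto
        then obtain z where "T y = (T ^^ k) z" by auto
        then show "cinner (T y) x = 0" using h by simp
      qed
      then show "S x = 0" using adjoint_kernel[OF S] by blast
    qed
  qed
  have P3: "coquasiposinormal T" if a: "ascent T = Some 1"
  proof -
    let ?P = "\<lambda>m. op_kernel (T ^^ m) = op_kernel (T ^^ Suc m)"
    have ex: "\<exists>m. ?P m" using a unfolding ascent_def by (auto split: if_splits)
    then have "(LEAST m. ?P m) = 1" using a unfolding ascent_def by auto
    with LeastI_ex[OF ex] have "?P 1" by simp
    then have N2: "T x = 0" if "T (T x) = 0" for x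
      using that unfolding op_kernel_def by (auto simp: numeral_2_eq_2)
    obtain l' where l': "l = Suc l'" using assms(3) by (cases l) auto
    show ?thesis unfolding coquasiposinormal_def op_kernel_def hadjoint_eq[OF S]
    proof (intro subsetI, simp)
      fix x assume "S x = 0"
      then have "(S ^^ l) x = 0" using pow_mono_kernel[of S 1 x l] S0 assms(3) by simp
      then have "(T ^^ Suc l') x = 0" using cl l' by simp
      then show "T x = 0" using ker_collapse[of T l' x] N2 by blast
    qed
  qed
  show ?thesis using P1 P2 P3 by blast
qed

end
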